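(* For every $g\in\mathscr T'$, the map $e^{a(g)}:\mathcal F_{\rm fin}(\mathscr T)\to\mathcal F_{\rm fin}(\mathscr T)$ is injective.
   Context: Let $\mathfrak h$ be a complex Hilbert space, $\mathscr T$ a topological vector space continuously embedded in $\mathfrak h$ with dense image, and $\mathscr T'$ the space of continuous antilinear functionals on $\mathscr T$; write $\langle\varphi,f\rangle:=\overline{\varphi(f)}$ for $\varphi\in\mathscr T'$, $f\in\mathscr T$. $\mathcal F(\mathfrak h)$ is the symmetric Fock space over $\mathfrak h$, and $\mathcal F_{\rm fin}(\mathscr T)$ the space of vectors with finitely many nonzero components, the $n$-th in the algebraic symmetric tensor product of $n$ copies of $\mathscr T$. For $g\in\mathscr T'$, $a(g):\mathcal F_{\rm fin}(\mathscr T)\to\mathcal F_{\rm fin}(\mathscr T)$ is defined linearly by $(a(g)\Psi)_n=\frac{\sqrt{n+1}}{(n+1)!}\sum_{\sigma\in S_{n+1}}\langle g,\psi_{\sigma(1)}\rangle\,\psi_{\sigma(2)}\otimes\cdots\otimes\psi_{\sigma(n+1)}$ for $\Psi_{n+1}=\psi_1\otimes_s\cdots\otimes_s\psi_{n+1}$, and $e^{a(g)}:=\sum_{k\ge0}a(g)^k/k!$, which is a finite sum on each vector of $\mathcal F_{\rm fin}(\mathscr T)$. *)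

theory Defs
  imports "HOL-Analysis.Analysis" "HOL-Combinatorics.Permutations"
begin

text \<open>Complex vector spaces are rendered as an additive group type together with an
  explicit complex scalar multiplication satisfying the library locale vector_space
  (the HOL library has no complex_vector type class).\<close>

definition complex_inner_product ::
  "(complex \<Rightarrow> 'h::ab_group_add \<Rightarrow> 'h) \<Rightarrow> ('h \<Rightarrow> 'h \<Rightarrow> complex) \<Rightarrow> bool" where
  "complex_inner_product smul ip \<longleftrightarrow>
     vector_space smul \<and>
     (\<forall>x y z. ip x (y + z) = ip x y + ip x z) \<and>
     (\<forall>x y c. ip x (smul c y) = c * ip x y) \<and>
     (\<forall>x y. ip y x = cnj (ip x y)) \<and>
     (\<forall>x. 0 \<le> Re (ip x x)) \<and>
     (\<forall>x. ip x x = 0 \<longrightarrow> x = 0)"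

definition ip_norm :: "('h \<Rightarrow> 'h \<Rightarrow> complex) \<Rightarrow> 'h \<Rightarrow> real" where
  "ip_norm ip x = sqrt (Re (ip x x))"

definition complex_hilbert_space ::
  "(complex \<Rightarrow> 'h::ab_group_add \<Rightarrow> 'h) \<Rightarrow> ('h \<Rightarrow> 'h \<Rightarrow> complex) \<Rightarrow> bool" where
  "complex_hilbert_space smul ip \<longleftrightarrow>
     complex_inner_product smul ip \<and>
     (\<forall>X::nat \<Rightarrow> 'h.
        (\<forall>e>0. \<exists>N. \<forall>m\<ge>N. \<forall>n\<ge>N. ip_norm ip (X m - X n) < e) \<longrightarrow>
        (\<exists>L. (\<lambda>n. ip_norm ip (X n - L)) \<longlonglongrightarrow> 0))"

definition complex_tvs :: "(complex \<Rightarrow> 't::{ab_group_add,topological_space} \<Rightarrow> 't) \<Rightarrow> bool" where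
  "complex_tvs smul \<longleftrightarrow>
     vector_space smul \<and>
     continuous_on UNIV (\<lambda>p::'t \<times> 't. fst p + snd p) \<and>
     continuous_on UNIV (\<lambda>p::complex \<times> 't. smul (fst p) (snd p))"

definition continuous_dense_embedding ::
  "(complex \<Rightarrow> 't::{ab_group_add,topological_space} \<Rightarrow> 't) \<Rightarrow> (complex \<Rightarrow> 'h::ab_group_add \<Rightarrow> 'h)
   \<Rightarrow> ('h \<Rightarrow> 'h \<Rightarrow> complex) \<Rightarrow> ('t \<Rightarrow> 'h) \<Rightarrow> bool" where
  "continuous_dense_embedding smulT smulH ip \<iota> \<longleftrightarrow>
     Vector_Spaces.linear smulT smulH \<iota> \<and> inj \<iota> \<and>
     (\<forall>x e. e > 0 \<longrightarrow> (\<exists>U. open U \<and> x \<in> U \<and> (\<forall>y\<in>U. ip_norm ip (\<iota> y - \<iota> x) < e))) \<and>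
     (\<forall>h e. e > 0 \<longrightarrow> (\<exists>x. ip_norm ip (\<iota> x - h) < e))"

definition antidual :: "(complex \<Rightarrow> 't::{ab_group_add,topological_space} \<Rightarrow> 't) \<Rightarrow> ('t \<Rightarrow> complex) set" where
  "antidual smulT = {g. (\<forall>x y. g (x + y) = g x + g y) \<and>
                        (\<forall>c x. g (smulT c x) = cnj c * g x) \<and> continuous_on UNIV g}"

definition dual_pairing :: "('t \<Rightarrow> complex) \<Rightarrow> 't \<Rightarrow> complex" where
  "dual_pairing g f = cnj (g f)"

text \<open>A vector of F_fin(T) is represented by a finitely supported coefficient function
  on lists: \<Psi> stands for the sum over lists ps of (\<Psi> ps) times
  ps!0 \<otimes>s ... \<otimes>s ps!(n-1) (n = length ps), where
  \<psi>1 \<otimes>s ... \<otimes>s \<psi>n = (1/n!) \<Sum>\<sigma> \<psi>\<sigma>(1) \<otimes> ... \<otimes> \<psi>\<sigma>(n).\<close>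
type_synonym 't fock_rep = "'t list \<Rightarrow> complex"

definition fock_fin :: "'t fock_rep \<Rightarrow> bool" where
  "fock_fin \<Psi> \<longleftrightarrow> finite {ps. \<Psi> ps \<noteq> 0}"

text \<open>Inner product in h^{\<otimes>n} of w1 \<otimes> ... \<otimes> wn with \<psi>1 \<otimes>s ... \<otimes>s \<psi>n.\<close>
definition sym_tensor_pairing ::
  "('h \<Rightarrow> 'h \<Rightarrow> complex) \<Rightarrow> ('t \<Rightarrow> 'h) \<Rightarrow> 'h list \<Rightarrow> 't list \<Rightarrow> complex" where
  "sym_tensor_pairing ip \<iota> ws ps =
     (1 / of_nat (fact (length ps))) *
     (\<Sum>\<sigma>\<in>{\<sigma>. \<sigma> permutes {..<length ps}}. \<Prod>i<length ps. ip (ws ! i) (\<iota> (ps ! \<sigma> i)))"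

text \<open>Inner product of w1 \<otimes> ... \<otimes> wn (n = length ws) with the n-th component of the
  Fock vector represented by \<Psi>.\<close>
definition fock_pairing ::
  "('h \<Rightarrow> 'h \<Rightarrow> complex) \<Rightarrow> ('t \<Rightarrow> 'h) \<Rightarrow> 't fock_rep \<Rightarrow> 'h list \<Rightarrow> complex" where
  "fock_pairing ip \<iota> \<Psi> ws =
     (\<Sum>ps\<in>{ps. \<Psi> ps \<noteq> 0 \<and> length ps = length ws}. \<Psi> ps * sym_tensor_pairing ip \<iota> ws ps)"

text \<open>Two representatives give the same vector of F(h) iff all their components have
  the same inner products with all simple tensors (which are total in h^{\<otimes>n}).\<close>
definition fock_eq ::
  "('h \<Rightarrow> 'h \<Rightarrow> complex) \<Rightarrow> ('t \<Rightarrow> 'h) \<Rightarrow> 't fock_rep \<Rightarrow> 't fock_rep \<Rightarrow> bool" where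
  "fock_eq ip \<iota> \<Psi> \<Phi> \<longleftrightarrow> (\<forall>ws. fock_pairing ip \<iota> \<Psi> ws = fock_pairing ip \<iota> \<Phi> ws)"

text \<open>Annihilation operator a(g): the term \<psi>1 \<otimes>s ... \<otimes>s \<psi>(n+1) is sent to
  sqrt(n+1)/(n+1)! \<Sum>\<sigma> <g,\<psi>\<sigma>(1)> \<psi>\<sigma>(2) \<otimes> ... \<otimes> \<psi>\<sigma>(n+1), extended linearly.
  Each summand is recorded as a symmetric-tensor term; since the sum over \<sigma> is symmetric,
  this represents the same vector.\<close>
definition annihilation :: "('t \<Rightarrow> complex) \<Rightarrow> 't fock_rep \<Rightarrow> 't fock_rep" where
  "annihilation g \<Psi> = (\<lambda>qs.
     (\<Sum>ps\<in>{ps. \<Psi> ps \<noteq> 0 \<and> length ps = Suc (length qs)}.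
        \<Sum>\<sigma>\<in>{\<sigma>. \<sigma> permutes {..<length ps} \<and> map (\<lambda>i. ps ! \<sigma> i) [1..<length ps] = qs}.
          \<Psi> ps * (of_real (sqrt (real (Suc (length qs)))) / of_nat (fact (Suc (length qs))))
               * dual_pairing g (ps ! \<sigma> 0)))"

definition fock_degree :: "'t fock_rep \<Rightarrow> nat" where
  "fock_degree \<Psi> = Max (insert 0 (length ` {ps. \<Psi> ps \<noteq> 0}))"

text \<open>e^{a(g)} = \<Sum>k a(g)^k / k!, a finite sum on F_fin(T) (a(g)^k \<Psi> = 0 for k > degree).\<close>
definition exp_annihilation :: "('t \<Rightarrow> complex) \<Rightarrow> 't fock_rep \<Rightarrow> 't fock_rep" where
  "exp_annihilation g \<Psi> = (\<lambda>qs.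
     \<Sum>k\<le>fock_degree \<Psi>. ((annihilation g ^^ k) \<Psi> qs) / of_nat (fact k))"

end

theory Submission
  imports Defs
begin


lemma fp_superset:
  assumes "finite A" "{ps. \<Psi> ps \<noteq> 0 \<and> length ps = length ws} \<subseteq> A"
    "\<forall>ps\<in>A. length ps = length ws"
  shows "fock_pairing ip \<iota> \<Psi> ws = (\<Sum>ps\<in>A. \<Psi> ps * sym_tensor_pairing ip \<iota> ws ps)"
  unfolding fock_pairing_def
  by (rule sum.mono_neutral_left) (use assms in auto)

lemma fp_lin:
  fixes F :: "nat \<Rightarrow> 't fock_rep"
  assumes K: "finite K" and fin: "\<forall>k\<in>K. fock_fin (F k)"
  shows "fock_pairing ip \<iota> (\<lambda>p. \<Sum>k\<in>K. c k * F k p) ws = (\<Sum>k\<in>K. c k * fock_pairing ip \<iota> (F k) ws)"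
proof -
  define A where "A = (\<Union>k\<in>K. {ps. F k ps \<noteq> 0 \<and> length ps = length ws})"
  have fA: "finite A" unfolding A_def using K fin by (auto simp: fock_fin_def)
  have lA: "\<forall>ps\<in>A. length ps = length ws" unfolding A_def by auto
  have "fock_pairing ip \<iota> (\<lambda>p. \<Sum>k\<in>K. c k * F k p) ws
      = (\<Sum>ps\<in>A. (\<Sum>k\<in>K. c k * F k ps) * sym_tensor_pairing ip \<iota> ws ps)"
  proof (rule fp_superset[OF fA _ lA], rule subsetI)
    fix ps assume "ps \<in> {ps. (\<Sum>k\<in>K. c k * F k ps) \<noteq> 0 \<and> length ps = length ws}"
    then have "(\<Sum>k\<in>K. c k * F k ps) \<noteq> 0" "length ps = length ws" by auto
    from sum.not_neutral_contains_not_neutral[OF this(1)] obtain k where "k \<in> K" "c k * F k ps \<noteq> 0" by blast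
    then show "ps \<in> A" using \<open>length ps = length ws\<close> unfolding A_def by auto
  qed
  also have "\<dots> = (\<Sum>k\<in>K. c k * (\<Sum>ps\<in>A. F k ps * sym_tensor_pairing ip \<iota> ws ps))"
    by (simp add: sum_distrib_left sum_distrib_right sum.swap[of _ A] mult.assoc)
  also have "\<dots> = (\<Sum>k\<in>K. c k * fock_pairing ip \<iota> (F k) ws)"
    by (rule sum.cong[OF refl], subst fp_superset[OF fA _ lA]) (auto simp: A_def)
  finally show ?thesis .
qed

lemma fp_diff:
  assumes "fock_fin \<Psi>" "fock_fin \<Phi>"
  shows "fock_pairing ip \<iota> (\<lambda>p. \<Psi> p - \<Phi> p) ws = fock_pairing ip \<iota> \<Psi> ws - fock_pairing ip \<iota> \<Phi> ws"
proof -
  define A where "A = {ps. \<Psi> ps \<noteq> 0 \<and> length ps = length ws} \<union> {ps. \<Phi> ps \<noteq> 0 \<and> length ps = length ws}"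
  have fA: "finite A" unfolding A_def using assms by (auto simp: fock_fin_def)
  have lA: "\<forall>ps\<in>A. length ps = length ws" unfolding A_def by auto
  show ?thesis
    apply (subst (1 2 3) fp_superset[OF fA _ lA])
    apply (auto simp: A_def left_diff_distrib sum_subtractf)
    done
qed

lemma ann_superset:
  assumes "finite A" "{ps. \<Psi> ps \<noteq> 0 \<and> length ps = Suc (length qs)} \<subseteq> A"
    "\<forall>ps\<in>A. length ps = Suc (length qs)"
  shows "annihilation g \<Psi> qs = (\<Sum>ps\<in>A.
        \<Sum>\<sigma>\<in>{\<sigma>. \<sigma> permutes {..<length ps} \<and> map (\<lambda>i. ps ! \<sigma> i) [1..<length ps] = qs}.
          \<Psi> ps * (of_real (sqrt (real (Suc (length qs)))) / of_nat (fact (Suc (length qs))))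
               * dual_pairing g (ps ! \<sigma> 0))"
  unfolding annihilation_def
  by (rule sum.mono_neutral_left) (use assms in auto)

lemma ann_diff:
  assumes "fock_fin \<Psi>" "fock_fin \<Phi>"
  shows "annihilation g (\<lambda>p. \<Psi> p - \<Phi> p) qs = annihilation g \<Psi> qs - annihilation g \<Phi> qs"
proof -
  define A where "A = {ps. \<Psi> ps \<noteq> 0 \<and> length ps = Suc (length qs)} \<union> {ps. \<Phi> ps \<noteq> 0 \<and> length ps = Suc (length qs)}"
  have fA: "finite A" unfolding A_def using assms by (auto simp: fock_fin_def)
  have lA: "\<forall>ps\<in>A. length ps = Suc (length qs)" unfolding A_def by auto
  have s1: "{ps. \<Psi> ps \<noteq> 0 \<and> length ps = Suc (length qs)} \<subseteq> A"
    and s2: "{ps. \<Phi> ps \<noteq> 0 \<and> length ps = Suc (length qs)} \<subseteq> A"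
    and s3: "{ps. \<Psi> ps - \<Phi> ps \<noteq> 0 \<and> length ps = Suc (length qs)} \<subseteq> A"
    by (auto simp: A_def)
  show ?thesis
    unfolding ann_superset[OF fA s1 lA] ann_superset[OF fA s2 lA] ann_superset[OF fA s3 lA]
    apply (simp only: sum_subtractf[symmetric])
    apply (rule sum.cong[OF refl])
    apply (rule sum.cong[OF refl])
    apply (simp only: left_diff_distrib diff_divide_distrib)
    done
qed

lemma ann_nz:
  assumes "annihilation g \<Psi> qs \<noteq> 0"
  shows "\<exists>ps \<sigma>. \<Psi> ps \<noteq> 0 \<and> length ps = Suc (length qs) \<and> \<sigma> permutes {..<length ps}
     \<and> map (\<lambda>i. ps ! \<sigma> i) [1..<length ps] = qs"
proof -
  obtain ps where ps: "ps \<in> {ps. \<Psi> ps \<noteq> 0 \<and> length ps = Suc (length qs)}"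
    and h: "(\<Sum>\<sigma>\<in>{\<sigma>. \<sigma> permutes {..<length ps} \<and> map (\<lambda>i. ps ! \<sigma> i) [1..<length ps] = qs}.
          \<Psi> ps * (of_real (sqrt (real (Suc (length qs)))) / of_nat (fact (Suc (length qs))))
               * dual_pairing g (ps ! \<sigma> 0)) \<noteq> 0"
    by (rule sum.not_neutral_contains_not_neutral[OF assms[unfolded annihilation_def]])
  obtain \<sigma> where "\<sigma> \<in> {\<sigma>. \<sigma> permutes {..<length ps} \<and> map (\<lambda>i. ps ! \<sigma> i) [1..<length ps] = qs}"
    by (rule sum.not_neutral_contains_not_neutral[OF h])
  with ps show ?thesis by blast
qed

lemma ann_fin:
  assumes "fock_fin \<Psi>"
  shows "fock_fin (annihilation g \<Psi>)"
proof -
  have "{qs. annihilation g \<Psi> qs \<noteq> 0} \<subseteq>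
     (\<Union>ps\<in>{ps. \<Psi> ps \<noteq> 0}. (\<lambda>\<sigma>. map (\<lambda>i. ps ! \<sigma> i) [1..<length ps]) ` {\<sigma>. \<sigma> permutes {..<length ps}})"
  proof
    fix qs assume "qs \<in> {qs. annihilation g \<Psi> qs \<noteq> 0}"
    then obtain ps \<sigma> where "\<Psi> ps \<noteq> 0" "\<sigma> permutes {..<length ps}" "map (\<lambda>i. ps ! \<sigma> i) [1..<length ps] = qs"
      using ann_nz by blast
    then show "qs \<in> (\<Union>ps\<in>{ps. \<Psi> ps \<noteq> 0}. (\<lambda>\<sigma>. map (\<lambda>i. ps ! \<sigma> i) [1..<length ps]) ` {\<sigma>. \<sigma> permutes {..<length ps}})"
      by blast
  qed
  moreover have "finite \<dots>" using assms unfolding fock_fin_def by (intro finite_UN_I finite_imageI finite_permutations) auto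
  ultimately show ?thesis unfolding fock_fin_def by (rule finite_subset)
qed

lemma annk_fin: "fock_fin \<Psi> \<Longrightarrow> fock_fin ((annihilation g ^^ k) \<Psi>)"
  by (induction k) (auto intro: ann_fin)

lemma annk_diff:
  assumes "fock_fin \<Psi>" "fock_fin \<Phi>"
  shows "(annihilation g ^^ k) (\<lambda>p. \<Psi> p - \<Phi> p) = (\<lambda>qs. (annihilation g ^^ k) \<Psi> qs - (annihilation g ^^ k) \<Phi> qs)"
proof (induction k)
  case 0 then show ?case by simp
next
  case (Suc k)
  have "(annihilation g ^^ Suc k) (\<lambda>p. \<Psi> p - \<Phi> p) = annihilation g (\<lambda>qs. (annihilation g ^^ k) \<Psi> qs - (annihilation g ^^ k) \<Phi> qs)"
    using Suc by simp
  also have "\<dots> = (\<lambda>qs. (annihilation g ^^ Suc k) \<Psi> qs - (annihilation g ^^ Suc k) \<Phi> qs)"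
    by (rule ext) (simp add: ann_diff annk_fin assms)
  finally show ?case .
qed

lemma annk_nz:
  "(annihilation g ^^ k) \<Psi> qs \<noteq> 0 \<Longrightarrow> \<exists>ps. \<Psi> ps \<noteq> 0 \<and> length ps = length qs + k"
proof (induction k arbitrary: qs)
  case 0 then show ?case by auto
next
  case (Suc k)
  then obtain ps where "(annihilation g ^^ k) \<Psi> ps \<noteq> 0" "length ps = Suc (length qs)"
    using ann_nz[of g "(annihilation g ^^ k) \<Psi>" qs] by auto
  then show ?case using Suc.IH[of ps] by auto
qed

lemma deg_ge:
  assumes "fock_fin \<Psi>" "\<Psi> ps \<noteq> 0"
  shows "length ps \<le> fock_degree \<Psi>"
  unfolding fock_degree_def
  by (rule Max_ge) (use assms in \<open>auto simp: fock_fin_def\<close>)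

lemma exp_M:
  assumes "fock_fin \<Psi>" "fock_degree \<Psi> \<le> M"
  shows "exp_annihilation g \<Psi> qs = (\<Sum>k\<le>M. (annihilation g ^^ k) \<Psi> qs / of_nat (fact k))"
  unfolding exp_annihilation_def
proof (rule sum.mono_neutral_left)
  show "\<forall>i\<in>{..M} - {..fock_degree \<Psi>}. (annihilation g ^^ i) \<Psi> qs / of_nat (fact i) = 0"
  proof
    fix i assume i: "i \<in> {..M} - {..fock_degree \<Psi>}"
    show "(annihilation g ^^ i) \<Psi> qs / of_nat (fact i) = 0"
    proof (rule ccontr)
      assume "\<not> ?thesis"
      then obtain ps where "\<Psi> ps \<noteq> 0" "length ps = length qs + i" by (auto dest!: annk_nz)
      with deg_ge[OF assms(1)] i show False by fastforce
    qed
  qed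
qed (use assms in auto)



lemma add_hom_sum:
  fixes \<phi> :: "'a::ab_group_add \<Rightarrow> 'b::ab_group_add"
  assumes "\<And>a b. \<phi> (a + b) = \<phi> a + \<phi> b"
  shows "\<phi> (\<Sum>i\<in>I. f i) = (\<Sum>i\<in>I. \<phi> (f i))"
proof -
  have "\<phi> 0 = 0" using assms[of 0 0] by simp
  then show ?thesis using sum_comp_morphism[of \<phi> f I, OF _ assms] by (simp add: o_def)
qed

lemma core:
  fixes smulH :: "complex \<Rightarrow> 'h::ab_group_add \<Rightarrow> 'h" and ip :: "'h \<Rightarrow> 'h \<Rightarrow> complex"
    and smulT :: "complex \<Rightarrow> 't::ab_group_add \<Rightarrow> 't" and \<iota> :: "'t \<Rightarrow> 'h" and g :: "'t \<Rightarrow> complex"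
  assumes ipadd: "\<And>x y z. ip x (y + z) = ip x y + ip x z"
    and ipsc: "\<And>x y c. ip x (smulH c y) = c * ip x y"
    and ippos: "\<And>x. ip x x = 0 \<Longrightarrow> x = 0"
    and iadd: "\<And>x y. \<iota> (x + y) = \<iota> x + \<iota> y"
    and isc: "\<And>c x. \<iota> (smulT c x) = smulH c (\<iota> x)"
    and iinj: "inj \<iota>"
    and gadd: "\<And>x y. g (x + y) = g x + g y"
    and gsc: "\<And>c x. g (smulT c x) = cnj c * g x"
    and fin: "fock_fin \<Psi>"
    and H: "\<And>ws'. length ws' = Suc (length ws) \<Longrightarrow> fock_pairing ip \<iota> \<Psi> ws' = 0"
  shows "fock_pairing ip \<iota> (annihilation g \<Psi>) ws = 0"
proof -
  define n where "n = length ws"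
  define A where "A = {ps. \<Psi> ps \<noteq> 0 \<and> length ps = Suc n}"
  define P where "P = {\<sigma>. \<sigma> permutes {..<Suc n}}"
  define Pn where "Pn = {\<tau>. \<tau> permutes {..<n}}"
  define T where "T = (\<lambda>x::'t list \<times> (nat \<Rightarrow> nat). map (\<lambda>i. fst x ! snd x i) [1..<Suc n])"
  define c where "c = (of_real (sqrt (real (Suc n))) / of_nat (fact (Suc n)) :: complex)"
  define G where "G = dual_pairing g"
  define K where "K = (\<lambda>ps \<sigma> \<tau>. \<Prod>i<n. ip (ws ! i) (\<iota> (ps ! \<sigma> (Suc (\<tau> i)))))"
  have fA: "finite A" using fin unfolding A_def fock_fin_def by auto
  have fP: "finite P" "finite Pn" unfolding P_def Pn_def by (auto intro: finite_permutations)
  have lT: "length (T x) = n" for x unfolding T_def by simp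
  have Tnth: "T (ps, \<sigma>) ! j = ps ! \<sigma> (Suc j)" if "j < n" for ps \<sigma> j
    unfolding T_def using that by (simp del: upt_Suc)
  have ann: "annihilation g \<Psi> qs = (\<Sum>x\<in>{x\<in>A\<times>P. T x = qs}. \<Psi> (fst x) * c * G (fst x ! snd x 0))"
    if "length qs = n" for qs
  proof -
    have "annihilation g \<Psi> qs = (\<Sum>ps\<in>A. \<Sum>\<sigma>\<in>{\<sigma>\<in>P. T (ps,\<sigma>) = qs}. \<Psi> ps * c * G (ps ! \<sigma> 0))"
      unfolding annihilation_def
    proof (rule sum.cong)
      show "{ps. \<Psi> ps \<noteq> 0 \<and> length ps = Suc (length qs)} = A" unfolding A_def using that by simp
      fix ps assume "ps \<in> A"
      then have "length ps = Suc n" unfolding A_def by simp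
      then show "(\<Sum>\<sigma>\<in>{\<sigma>. \<sigma> permutes {..<length ps} \<and> map (\<lambda>i. ps ! \<sigma> i) [1..<length ps] = qs}.
             \<Psi> ps * (complex_of_real (sqrt (real (Suc (length qs)))) / of_nat (fact (Suc (length qs)))) *
             dual_pairing g (ps ! \<sigma> 0)) =
         (\<Sum>\<sigma>\<in>{\<sigma> \<in> P. T (ps, \<sigma>) = qs}. \<Psi> ps * c * G (ps ! \<sigma> 0))"
        using that unfolding P_def T_def c_def G_def by simp
    qed
    also have "\<dots> = (\<Sum>x\<in>(SIGMA ps:A. {\<sigma>\<in>P. T (ps,\<sigma>) = qs}). \<Psi> (fst x) * c * G (fst x ! snd x 0))"
      by (subst sum.Sigma) (use fA fP in \<open>auto simp: case_prod_beta\<close>)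
    also have "(SIGMA ps:A. {\<sigma>\<in>P. T (ps,\<sigma>) = qs}) = {x\<in>A\<times>P. T x = qs}" by auto
    finally show ?thesis .
  qed
  define B where "B = T ` (A \<times> P)"
  have fB: "finite B" using fA fP unfolding B_def by auto
  have "fock_pairing ip \<iota> (annihilation g \<Psi>) ws = (\<Sum>qs\<in>B. annihilation g \<Psi> qs * sym_tensor_pairing ip \<iota> ws qs)"
  proof (rule fp_superset[OF fB])
    show "{qs. annihilation g \<Psi> qs \<noteq> 0 \<and> length qs = length ws} \<subseteq> B"
    proof
      fix qs assume "qs \<in> {qs. annihilation g \<Psi> qs \<noteq> 0 \<and> length qs = length ws}"
      then have "annihilation g \<Psi> qs \<noteq> 0" "length qs = n" by (auto simp: n_def)
      then have "(\<Sum>x\<in>{x\<in>A\<times>P. T x = qs}. \<Psi> (fst x) * c * G (fst x ! snd x 0)) \<noteq> 0"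
        using ann by simp
      then obtain x where "x \<in> {x\<in>A\<times>P. T x = qs}" by (rule sum.not_neutral_contains_not_neutral)
      then show "qs \<in> B" unfolding B_def by auto
    qed
    show "\<forall>ps\<in>B. length ps = length ws" unfolding B_def using lT n_def by auto
  qed
  also have "\<dots> = (\<Sum>qs\<in>B. \<Sum>x\<in>{x\<in>A\<times>P. T x = qs}.
      \<Psi> (fst x) * c * G (fst x ! snd x 0) * sym_tensor_pairing ip \<iota> ws (T x))"
  proof (rule sum.cong[OF refl])
    fix qs assume "qs \<in> B"
    then have "length qs = n" unfolding B_def using lT by auto
    then show "annihilation g \<Psi> qs * sym_tensor_pairing ip \<iota> ws qs = (\<Sum>x\<in>{x\<in>A\<times>P. T x = qs}.
      \<Psi> (fst x) * c * G (fst x ! snd x 0) * sym_tensor_pairing ip \<iota> ws (T x))"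
      by (simp add: ann sum_distrib_right)
  qed
  also have "\<dots> = (\<Sum>x\<in>A\<times>P. \<Psi> (fst x) * c * G (fst x ! snd x 0) * sym_tensor_pairing ip \<iota> ws (T x))"
    by (rule sum.group) (use fA fP fB in \<open>auto simp: B_def\<close>)
  also have "\<dots> = (\<Sum>x\<in>A\<times>P. \<Psi> (fst x) * c * G (fst x ! snd x 0) *
       (1 / of_nat (fact n) * (\<Sum>\<tau>\<in>Pn. K (fst x) (snd x) \<tau>)))"
  proof (rule sum.cong[OF refl])
    fix x :: "'t list \<times> (nat \<Rightarrow> nat)"
    obtain ps \<sigma> where x: "x = (ps, \<sigma>)" by fastforce
    have "sym_tensor_pairing ip \<iota> ws (T x) = 1 / of_nat (fact n) * (\<Sum>\<tau>\<in>Pn. K ps \<sigma> \<tau>)"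
      unfolding sym_tensor_pairing_def lT Pn_def K_def
    proof (intro arg_cong2[where f="(*)"] refl sum.cong prod.cong)
      fix \<tau> i assume "\<tau> \<in> {\<tau>. \<tau> permutes {..<n}}" "i \<in> {..<n}"
      then have "\<tau> i < n" using permutes_in_image by fastforce
      then show "ip (ws ! i) (\<iota> (T x ! \<tau> i)) = ip (ws ! i) (\<iota> (ps ! \<sigma> (Suc (\<tau> i))))"
        using Tnth x by simp
    qed
    then show "\<Psi> (fst x) * c * G (fst x ! snd x 0) * sym_tensor_pairing ip \<iota> ws (T x) =
      \<Psi> (fst x) * c * G (fst x ! snd x 0) * (1 / of_nat (fact n) * (\<Sum>\<tau>\<in>Pn. K (fst x) (snd x) \<tau>))"
      using x by simp
  qed
  also have "\<dots> = c / of_nat (fact n) * (\<Sum>x\<in>A\<times>P. \<Sum>\<tau>\<in>Pn. \<Psi> (fst x) * K (fst x) (snd x) \<tau> * G (fst x ! snd x 0))"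
    by (simp add: sum_distrib_left sum_distrib_right mult_ac)
  finally have eq1: "fock_pairing ip \<iota> (annihilation g \<Psi>) ws =
    c / of_nat (fact n) * (\<Sum>x\<in>A\<times>P. \<Sum>\<tau>\<in>Pn. \<Psi> (fst x) * K (fst x) (snd x) \<tau> * G (fst x ! snd x 0))" .
  define u where "u = (\<Sum>x\<in>A\<times>P. \<Sum>\<tau>\<in>Pn. smulT (\<Psi> (fst x) * K (fst x) (snd x) \<tau>) (fst x ! snd x 0))"
  have lin: "\<phi> u = (\<Sum>x\<in>A\<times>P. \<Sum>\<tau>\<in>Pn. \<Psi> (fst x) * K (fst x) (snd x) \<tau> * \<phi> (fst x ! snd x 0))"
    if add: "\<And>a b. \<phi> (a + b) = \<phi> a + \<phi> b" and sc: "\<And>a t. \<phi> (smulT a t) = a * \<phi> t" for \<phi> :: "'t \<Rightarrow> complex"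
    unfolding u_def add_hom_sum[of \<phi>, OF add] sc ..
  have Gu: "G u = (\<Sum>x\<in>A\<times>P. \<Sum>\<tau>\<in>Pn. \<Psi> (fst x) * K (fst x) (snd x) \<tau> * G (fst x ! snd x 0))"
    by (rule lin) (simp_all add: G_def dual_pairing_def gadd gsc)
  have ipu: "ip w (\<iota> u) = 0" for w
  proof -
    have "ip w (\<iota> u) = (\<Sum>x\<in>A\<times>P. \<Sum>\<tau>\<in>Pn. \<Psi> (fst x) * K (fst x) (snd x) \<tau> * ip w (\<iota> (fst x ! snd x 0)))"
      by (rule lin) (simp_all add: iadd ipadd isc ipsc)
    also have "\<dots> = (\<Sum>\<tau>\<in>Pn. \<Sum>x\<in>A\<times>P. \<Psi> (fst x) * K (fst x) (snd x) \<tau> * ip w (\<iota> (fst x ! snd x 0)))"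
      by (rule sum.swap)
    also have "\<dots> = 0"
    proof (rule sum.neutral, rule ballI)
      fix \<tau> assume "\<tau> \<in> Pn"
      then have tp: "\<tau> permutes {..<n}" unfolding Pn_def by simp
      define ws' where "ws' = w # map (\<lambda>j. ws ! inv \<tau> j) [0..<n]"
      have lws': "length ws' = Suc (length ws)" unfolding ws'_def n_def by simp
      have "fock_pairing ip \<iota> \<Psi> ws' = (\<Sum>ps\<in>A. \<Psi> ps * sym_tensor_pairing ip \<iota> ws' ps)"
        unfolding fock_pairing_def A_def using lws' n_def by simp
      also have "\<dots> = (\<Sum>ps\<in>A. 1 / of_nat (fact (Suc n)) * (\<Sum>\<sigma>\<in>P. \<Psi> ps * K ps \<sigma> \<tau> * ip w (\<iota> (ps ! \<sigma> 0))))"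
      proof (rule sum.cong[OF refl])
        fix ps assume "ps \<in> A"
        then have lps: "length ps = Suc n" unfolding A_def by simp
        have pr: "(\<Prod>i<length ps. ip (ws' ! i) (\<iota> (ps ! \<sigma> i))) = K ps \<sigma> \<tau> * ip w (\<iota> (ps ! \<sigma> 0))" for \<sigma>
        proof -
          have "(\<Prod>i<length ps. ip (ws' ! i) (\<iota> (ps ! \<sigma> i))) =
              ip w (\<iota> (ps ! \<sigma> 0)) * (\<Prod>i<n. ip (ws ! inv \<tau> i) (\<iota> (ps ! \<sigma> (Suc i))))"
            unfolding lps prod.lessThan_Suc_shift by (simp add: ws'_def)
          also have "(\<Prod>i<n. ip (ws ! inv \<tau> i) (\<iota> (ps ! \<sigma> (Suc i)))) = K ps \<sigma> \<tau>"
            unfolding K_def by (subst prod.permute[OF tp]) (simp add: o_def permutes_inverses(2)[OF tp])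
          finally show ?thesis by simp
        qed
        show "\<Psi> ps * sym_tensor_pairing ip \<iota> ws' ps =
          1 / of_nat (fact (Suc n)) * (\<Sum>\<sigma>\<in>P. \<Psi> ps * K ps \<sigma> \<tau> * ip w (\<iota> (ps ! \<sigma> 0)))"
          unfolding sym_tensor_pairing_def pr unfolding lps P_def
          by (simp add: sum_distrib_left mult_ac)
      qed
      also have "\<dots> = 1 / of_nat (fact (Suc n)) * (\<Sum>x\<in>A\<times>P. \<Psi> (fst x) * K (fst x) (snd x) \<tau> * ip w (\<iota> (fst x ! snd x 0)))"
        by (simp add: sum.cartesian_product sum_distrib_left case_prod_beta)
      finally have "fock_pairing ip \<iota> \<Psi> ws' = 1 / of_nat (fact (Suc n)) * (\<Sum>x\<in>A\<times>P. \<Psi> (fst x) * K (fst x) (snd x) \<tau> * ip w (\<iota> (fst x ! snd x 0)))" .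
      moreover have "(of_nat (fact (Suc n)) :: complex) \<noteq> 0" by (simp only: of_nat_fact fact_nonzero not_False_eq_True)
      ultimately show "(\<Sum>x\<in>A\<times>P. \<Psi> (fst x) * K (fst x) (snd x) \<tau> * ip w (\<iota> (fst x ! snd x 0))) = 0"
        using H[OF lws'] by (simp del: fact_Suc)
    qed
    finally show ?thesis .
  qed
  have i0: "\<iota> 0 = 0" using iadd[of 0 0] by simp
  have "\<iota> u = 0" using ippos ipu by blast
  then have "u = 0" using iinj i0 by (metis injD)
  moreover have "G 0 = 0" using gadd[of 0 0] by (simp add: G_def dual_pairing_def)
  ultimately show ?thesis using eq1 Gu by simp
qed

lemma fin_sum:
  fixes F :: "nat \<Rightarrow> 't fock_rep"
  assumes K: "finite K" and fin: "\<forall>k\<in>K. fock_fin (F k)"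
  shows "fock_fin (\<lambda>p. \<Sum>k\<in>K. c k * F k p)"
proof -
  have "{p. (\<Sum>k\<in>K. c k * F k p) \<noteq> 0} \<subseteq> (\<Union>k\<in>K. {p. F k p \<noteq> 0})"
  proof
    fix p assume "p \<in> {p. (\<Sum>k\<in>K. c k * F k p) \<noteq> 0}"
    then have "(\<Sum>k\<in>K. c k * F k p) \<noteq> 0" by simp
    from sum.not_neutral_contains_not_neutral[OF this] obtain k where "k \<in> K" "c k * F k p \<noteq> 0" by blast
    then show "p \<in> (\<Union>k\<in>K. {p. F k p \<noteq> 0})" by auto
  qed
  moreover have "finite (\<Union>k\<in>K. {p. F k p \<noteq> 0})" using K fin unfolding fock_fin_def by auto
  ultimately show ?thesis unfolding fock_fin_def by (rule finite_subset)
qed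

lemma diff_fin: "fock_fin \<Psi> \<Longrightarrow> fock_fin \<Phi> \<Longrightarrow> fock_fin (\<lambda>p. \<Psi> p - \<Phi> p)"
  unfolding fock_fin_def
  by (rule finite_subset[of _ "{ps. \<Psi> ps \<noteq> 0} \<union> {ps. \<Phi> ps \<noteq> 0}"]) auto

lemma exp_form: "exp_annihilation g \<Psi> = (\<lambda>qs. \<Sum>k\<le>fock_degree \<Psi>. (1 / of_nat (fact k)) * (annihilation g ^^ k) \<Psi> qs)"
  unfolding exp_annihilation_def by simp

lemma exp_fin: "fock_fin \<Psi> \<Longrightarrow> fock_fin (exp_annihilation g \<Psi>)"
  unfolding exp_form by (rule fin_sum) (auto intro: annk_fin)

context
  fixes smulH :: "complex \<Rightarrow> 'h::ab_group_add \<Rightarrow> 'h" and ip :: "'h \<Rightarrow> 'h \<Rightarrow> complex"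
    and smulT :: "complex \<Rightarrow> 't::ab_group_add \<Rightarrow> 't" and \<iota> :: "'t \<Rightarrow> 'h" and g :: "'t \<Rightarrow> complex"
  assumes ipadd: "\<And>x y z. ip x (y + z) = ip x y + ip x z"
    and ipsc: "\<And>x y c. ip x (smulH c y) = c * ip x y"
    and ippos: "\<And>x. ip x x = 0 \<Longrightarrow> x = 0"
    and iadd: "\<And>x y. \<iota> (x + y) = \<iota> x + \<iota> y"
    and isc: "\<And>c x. \<iota> (smulT c x) = smulH c (\<iota> x)"
    and iinj: "inj \<iota>"
    and gadd: "\<And>x y. g (x + y) = g x + g y"
    and gsc: "\<And>c x. g (smulT c x) = cnj c * g x"
begin

lemma annk_vanish:
  assumes fin: "fock_fin D"
  shows "(\<And>ws'. length ws' = m + k \<Longrightarrow> fock_pairing ip \<iota> D ws' = 0) \<Longrightarrow> length ws = m \<Longrightarrow>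
    fock_pairing ip \<iota> ((annihilation g ^^ k) D) ws = 0"
proof (induction k arbitrary: m ws)
  case 0 then show ?case by simp
next
  case (Suc k)
  have "fock_pairing ip \<iota> (annihilation g ((annihilation g ^^ k) D)) ws = 0"
  proof (rule core[where smulH=smulH and smulT=smulT, OF ipadd ipsc ippos iadd isc iinj gadd gsc])
    show "fock_fin ((annihilation g ^^ k) D)" using fin by (rule annk_fin)
    fix ws' :: "'h list" assume "length ws' = Suc (length ws)"
    then show "fock_pairing ip \<iota> ((annihilation g ^^ k) D) ws' = 0"
      using Suc.IH[of "Suc m" ws'] Suc.prems by simp
  qed
  then show ?case by simp
qed

lemma main_inj:
  assumes finP: "fock_fin \<Psi>" and finF: "fock_fin \<Phi>"
    and eq: "fock_eq ip \<iota> (exp_annihilation g \<Psi>) (exp_annihilation g \<Phi>)"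
  shows "fock_eq ip \<iota> \<Psi> \<Phi>"
proof -
  define D where "D = (\<lambda>p. \<Psi> p - \<Phi> p)"
  have finD: "fock_fin D" unfolding D_def using finP finF by (rule diff_fin)
  define M where "M = max (fock_degree \<Psi>) (fock_degree \<Phi>)"
  have M1: "fock_degree \<Psi> \<le> M" and M2: "fock_degree \<Phi> \<le> M" unfolding M_def by auto
  have E: "(\<lambda>qs. \<Sum>k\<le>M. (1 / of_nat (fact k)) * (annihilation g ^^ k) D qs)
      = (\<lambda>qs. exp_annihilation g \<Psi> qs - exp_annihilation g \<Phi> qs)"
  proof
    fix qs
    show "(\<Sum>k\<le>M. (1 / of_nat (fact k)) * (annihilation g ^^ k) D qs) = exp_annihilation g \<Psi> qs - exp_annihilation g \<Phi> qs"
      unfolding exp_M[OF finP M1] exp_M[OF finF M2] D_def annk_diff[OF finP finF]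
      by (simp add: sum_subtractf[symmetric] diff_divide_distrib)
  qed
  have P0: "(\<Sum>k\<le>M. (1 / of_nat (fact k)) * fock_pairing ip \<iota> ((annihilation g ^^ k) D) ws) = 0" for ws
  proof -
    have "(\<Sum>k\<le>M. (1 / of_nat (fact k)) * fock_pairing ip \<iota> ((annihilation g ^^ k) D) ws)
        = fock_pairing ip \<iota> (\<lambda>qs. \<Sum>k\<le>M. (1 / of_nat (fact k)) * (annihilation g ^^ k) D qs) ws"
      by (rule fp_lin[symmetric]) (auto intro: annk_fin finD)
    also have "\<dots> = 0" unfolding E
      using eq unfolding fock_eq_def by (simp add: fp_diff exp_fin finP finF)
    finally show ?thesis .
  qed
  have Z: "\<forall>ws. length ws = n \<longrightarrow> fock_pairing ip \<iota> D ws = 0" for n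
  proof (induction "Suc M - n" arbitrary: n rule: less_induct)
    case less
    show ?case
    proof (cases "M < n")
      case True
      have emp: "{ps. D ps \<noteq> 0 \<and> length ps = n} = {}"
      proof -
        have "length ps \<le> M" if "D ps \<noteq> 0" for ps
        proof -
          have "\<Psi> ps \<noteq> 0 \<or> \<Phi> ps \<noteq> 0" using that unfolding D_def by auto
          then show ?thesis using deg_ge[OF finP, of ps] deg_ge[OF finF, of ps] unfolding M_def by auto
        qed
        then show ?thesis using True by fastforce
      qed
      show ?thesis
      proof (intro allI impI)
        fix ws :: "'h list" assume "length ws = n"
        then have e2: "{ps. D ps \<noteq> 0 \<and> length ps = length ws} = {}" using emp by simp
        show "fock_pairing ip \<iota> D ws = 0" unfolding fock_pairing_def e2 by (rule sum.empty)
      qed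
    next
      case False
      show ?thesis
      proof (intro allI impI)
        fix ws :: "'h list" assume lw: "length ws = n"
        have vanish: "fock_pairing ip \<iota> ((annihilation g ^^ k) D) ws = 0" if "k \<noteq> 0" for k
        proof (rule annk_vanish[OF finD _ lw])
          fix ws' :: "'h list" assume "length ws' = n + k"
          moreover have "Suc M - (n + k) < Suc M - n" using False that by simp
          ultimately show "fock_pairing ip \<iota> D ws' = 0" using less.hyps by blast
        qed
        have "(\<Sum>k\<le>M. (1 / of_nat (fact k)) * fock_pairing ip \<iota> ((annihilation g ^^ k) D) ws)
            = (\<Sum>k\<le>M. if k = 0 then fock_pairing ip \<iota> D ws else 0)"
          by (rule sum.cong[OF refl]) (simp add: vanish)
        also have "\<dots> = fock_pairing ip \<iota> D ws" by (simp add: sum.delta)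
        finally show "fock_pairing ip \<iota> D ws = 0" using P0[of ws] by simp
      qed
    qed
  qed
  show ?thesis unfolding fock_eq_def
  proof
    fix ws :: "'h list"
    have "fock_pairing ip \<iota> D ws = 0" using Z by blast
    then show "fock_pairing ip \<iota> \<Psi> ws = fock_pairing ip \<iota> \<Phi> ws"
      unfolding D_def fp_diff[OF finP finF] by simp
  qed
qed

end


theorem proposition2p9:
  fixes smulH :: "complex \<Rightarrow> 'h::ab_group_add \<Rightarrow> 'h"
    and ip :: "'h \<Rightarrow> 'h \<Rightarrow> complex"
    and smulT :: "complex \<Rightarrow> 't::{ab_group_add,topological_space} \<Rightarrow> 't"
    and \<iota> :: "'t \<Rightarrow> 'h"
    and g :: "'t \<Rightarrow> complex"
  assumes "complex_hilbert_space smulH ip"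
    and "complex_tvs smulT"
    and "continuous_dense_embedding smulT smulH ip \<iota>"
    and "g \<in> antidual smulT"
  shows "\<forall>\<Psi> \<Phi>. fock_fin \<Psi> \<longrightarrow> fock_fin \<Phi> \<longrightarrow>
           fock_eq ip \<iota> (exp_annihilation g \<Psi>) (exp_annihilation g \<Phi>) \<longrightarrow>
           fock_eq ip \<iota> \<Psi> \<Phi>"
proof (intro allI impI)
  fix \<Psi> \<Phi> :: "'t fock_rep"
  assume f1: "fock_fin \<Psi>" and f2: "fock_fin \<Phi>"
    and eq: "fock_eq ip \<iota> (exp_annihilation g \<Psi>) (exp_annihilation g \<Phi>)"
  have ci: "complex_inner_product smulH ip" using assms(1) unfolding complex_hilbert_space_def by (rule conjunct1)
  then have c: "(\<forall>x y z. ip x (y + z) = ip x y + ip x z) \<and> (\<forall>x y c. ip x (smulH c y) = c * ip x y)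
      \<and> (\<forall>x. ip x x = 0 \<longrightarrow> x = 0)"
    unfolding complex_inner_product_def by (elim conjE) (intro conjI; assumption)
  have ipadd: "\<And>x y z. ip x (y + z) = ip x y + ip x z" by (rule c[THEN conjunct1, rule_format])
  have ipsc: "\<And>x y c. ip x (smulH c y) = c * ip x y" by (rule c[THEN conjunct2, THEN conjunct1, rule_format])
  have ippos: "\<And>x. ip x x = 0 \<Longrightarrow> x = 0" using c[THEN conjunct2, THEN conjunct2, rule_format] .
  have lin: "Vector_Spaces.linear smulT smulH \<iota>"
    using assms(3) unfolding continuous_dense_embedding_def by (rule conjunct1)
  have iinj: "inj \<iota>"
    using assms(3) unfolding continuous_dense_embedding_def by (rule conjunct2[THEN conjunct1])
  have l2: "(\<forall>x y. \<iota> (x + y) = \<iota> x + \<iota> y) \<and> (\<forall>c x. \<iota> (smulT c x) = smulH c (\<iota> x))"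
    using lin unfolding Vector_Spaces.linear_iff by (elim conjE) (intro conjI; assumption)
  have iadd: "\<And>x y. \<iota> (x + y) = \<iota> x + \<iota> y" by (rule l2[THEN conjunct1, rule_format])
  have isc: "\<And>c x. \<iota> (smulT c x) = smulH c (\<iota> x)" by (rule l2[THEN conjunct2, rule_format])
  have g2: "(\<forall>x y. g (x + y) = g x + g y) \<and> (\<forall>c x. g (smulT c x) = cnj c * g x)"
    using assms(4) unfolding antidual_def mem_Collect_eq by (elim conjE) (intro conjI; assumption)
  have gadd: "\<And>x y. g (x + y) = g x + g y" by (rule g2[THEN conjunct1, rule_format])
  have gsc: "\<And>c x. g (smulT c x) = cnj c * g x" by (rule g2[THEN conjunct2, rule_format])
  show "fock_eq ip \<iota> \<Psi> \<Phi>"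
    by (rule main_inj[where smulH=smulH and smulT=smulT, OF ipadd ipsc ippos iadd isc iinj gadd gsc f1 f2 eq])
qed

end
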